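(* Let $n\geq2$, let $q\in\mathbb{C}$ with $|q|>1$, fix $q^{1/2}$, and let $a_1,\ldots,a_n,b_1,\ldots,b_n$ be nonzero complex parameters with $\prod_{j=1}^n a_j=q^{(n-1)/2}$. Let $x_j(t),y_j(t)$ $(j=1,\ldots,n)$ be functions satisfying the system $q$-$P_{(n,n)}$: \[\begin{split} x_j(t)-x_{j-1}(t)&=\frac{a_jx_j(qt)}{1+x_j(qt)y_{j-1}(t)}-\frac{b_{j-1}x_{j-1}(qt)}{1+x_{j-1}(qt)y_{j-1}(t)},\\ y_j(qt)-y_{j-1}(qt)&=\frac{b_jy_j(t)}{1+x_j(qt)y_j(t)}-\frac{a_jy_{j-1}(t)}{1+x_j(qt)y_{j-1}(t)}, \end{split}\qquad (j=1,\ldots,n),\] where $b_0=q^{-1}b_n$, $x_0(t)=tx_n(t)$, $y_0(t)=q^{-1}t^{-1}y_n(t)$ (as functions of $t$), together with the relation \[ \prod_{j=1}^{n}a_j\frac{1+x_j(qt)y_j(t)}{1+x_j(qt)y_{j-1}(t)}=q^{(n-1)/2}, \] and suppose moreover that $y_j(t)=0$ for all $j=1,\ldots,n$. Then the vector $\mathbf{x}(t)={}^t[x_1(t),\ldots,x_n(t)]$ satisfies the linear $q$-difference system \[ \mathbf{x}(q^{-1}t)=\left(A_0+\frac{A_1}{1-q^{-1}t}\right)\mathbf{x}(t), \] where \[ A_0=\sum_{j=1}^{n}b_jE_{j,j}+\sum_{i=1}^{n}\sum_{j=i+1}^{n}(b_j-a_j)E_{i,j},\qquad A_1=\sum_{i=1}^{n}\sum_{j=1}^{n}(a_j-b_j)E_{i,j}.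 \]
   Context: $E_{i,j}$ denotes the $n\times n$ matrix unit with $1$ in the $(i,j)$ entry and zeros elsewhere. All denominators are assumed nonzero. *)

theory Defs
  imports Complex_Main "HOL-Library.Function_Algebras"
begin

text \<open>Matrices are functions nat => nat => complex indexed by 1..n;
  the matrix unit E_{i,j}.\<close>
definition matunit :: "nat \<Rightarrow> nat \<Rightarrow> (nat \<Rightarrow> nat \<Rightarrow> complex)" where
  "matunit i j = (\<lambda>k l. if k = i \<and> l = j then 1 else 0)"

definition smat :: "complex \<Rightarrow> (nat \<Rightarrow> nat \<Rightarrow> complex) \<Rightarrow> (nat \<Rightarrow> nat \<Rightarrow> complex)" where
  "smat c M = (\<lambda>k l. c * M k l)"

text \<open>Extension of the index range to j = 0 via the conventions
  b_0 = q^{-1} b_n, x_0(t) = t x_n(t), y_0(t) = q^{-1} t^{-1} y_n(t).\<close>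
definition bext :: "complex \<Rightarrow> nat \<Rightarrow> (nat \<Rightarrow> complex) \<Rightarrow> nat \<Rightarrow> complex" where
  "bext q n b j = (if j = 0 then b n / q else b j)"

definition xext :: "nat \<Rightarrow> (nat \<Rightarrow> complex \<Rightarrow> complex) \<Rightarrow> nat \<Rightarrow> complex \<Rightarrow> complex" where
  "xext n x j t = (if j = 0 then t * x n t else x j t)"

definition yext :: "complex \<Rightarrow> nat \<Rightarrow> (nat \<Rightarrow> complex \<Rightarrow> complex) \<Rightarrow> nat \<Rightarrow> complex \<Rightarrow> complex" where
  "yext q n y j t = (if j = 0 then y n t / (q * t) else y j t)"

definition A0 :: "nat \<Rightarrow> (nat \<Rightarrow> complex) \<Rightarrow> (nat \<Rightarrow> complex) \<Rightarrow> (nat \<Rightarrow> nat \<Rightarrow> complex)" where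
  "A0 n a b = (\<Sum>j\<in>{1..n}. smat (b j) (matunit j j))
     + (\<Sum>i\<in>{1..n}. \<Sum>j\<in>{i+1..n}. smat (b j - a j) (matunit i j))"

definition A1 :: "nat \<Rightarrow> (nat \<Rightarrow> complex) \<Rightarrow> (nat \<Rightarrow> complex) \<Rightarrow> (nat \<Rightarrow> nat \<Rightarrow> complex)" where
  "A1 n a b = (\<Sum>i\<in>{1..n}. \<Sum>j\<in>{1..n}. smat (a j - b j) (matunit i j))"

end

theory Submission
  imports Defs
begin

lemma sum_fun_app: "(sum f S) x = sum (\<lambda>k. f k x) S"
  by (induction S rule: infinite_finite_induct) (auto simp: plus_fun_def zero_fun_def)

lemma smat_unit: "smat c (matunit k l) i j = (if k = i then (if l = j then c else 0) else 0)"
  by (auto simp: smat_def matunit_def)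

lemma A0_entry:
  assumes "i \<in> {1..n}" "j \<in> {1..n}"
  shows "A0 n a b i j = (if i = j then b j else 0) + (if i < j then b j - a j else 0)"
proof -
  have 1: "(\<Sum>k\<in>{1..n}. smat (b k) (matunit k k) i j) = (if i = j then b j else 0)"
  proof -
    have "(\<Sum>k\<in>{1..n}. smat (b k) (matunit k k) i j) = (\<Sum>k\<in>{1..n}. if k = i then (if i = j then b j else 0) else 0)"
      by (intro sum.cong) (auto simp: smat_unit)
    then show ?thesis using assms by simp
  qed
  have 2: "(\<Sum>k\<in>{1..n}. \<Sum>l\<in>{k+1..n}. smat (b l - a l) (matunit k l) i j)
      = (if i < j then b j - a j else 0)"
  proof -
    have "(\<Sum>k\<in>{1..n}. \<Sum>l\<in>{k+1..n}. smat (b l - a l) (matunit k l) i j)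
       = (\<Sum>k\<in>{1..n}. if k = i then (if i < j then b j - a j else 0) else 0)"
      using assms by (intro sum.cong) (auto simp: smat_unit)
    then show ?thesis using assms by simp
  qed
  show ?thesis unfolding A0_def using 1 2 by (simp add: sum_fun_app)
qed

lemma A1_entry:
  assumes "i \<in> {1..n}" "j \<in> {1..n}"
  shows "A1 n a b i j = a j - b j"
proof -
  have "A1 n a b i j = (\<Sum>k\<in>{1..n}. if k = i then a j - b j else 0)"
    unfolding A1_def sum_fun_app using assms by (intro sum.cong) (auto simp: smat_unit)
  then show ?thesis using assms by simp
qed
theorem mainTheorem3:
  fixes n :: nat and q sq :: complex
    and a b :: "nat \<Rightarrow> complex"
    and x y :: "nat \<Rightarrow> complex \<Rightarrow> complex"
  assumes n2: "n \<ge> 2"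
    and q: "norm q > 1"
    and sq: "sq ^ 2 = q"
    and a_nz: "\<forall>j\<in>{1..n}. a j \<noteq> 0"
    and b_nz: "\<forall>j\<in>{1..n}. b j \<noteq> 0"
    and prod_a: "(\<Prod>j\<in>{1..n}. a j) = sq ^ (n - 1)"
    and eq1: "\<forall>t. t \<noteq> 0 \<longrightarrow> (\<forall>j\<in>{1..n}.
        xext n x j t - xext n x (j - 1) t
        = a j * xext n x j (q * t) / (1 + xext n x j (q * t) * yext q n y (j - 1) t)
          - bext q n b (j - 1) * xext n x (j - 1) (q * t)
              / (1 + xext n x (j - 1) (q * t) * yext q n y (j - 1) t))"
    and eq2: "\<forall>t. t \<noteq> 0 \<longrightarrow> (\<forall>j\<in>{1..n}.
        yext q n y j (q * t) - yext q n y (j - 1) (q * t)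
        = b j * yext q n y j t / (1 + xext n x j (q * t) * yext q n y j t)
          - a j * yext q n y (j - 1) t / (1 + xext n x j (q * t) * yext q n y (j - 1) t))"
    and rel: "\<forall>t. t \<noteq> 0 \<longrightarrow>
        (\<Prod>j\<in>{1..n}. a j * (1 + xext n x j (q * t) * yext q n y j t)
                          / (1 + xext n x j (q * t) * yext q n y (j - 1) t)) = sq ^ (n - 1)"
    and y0: "\<forall>j\<in>{1..n}. \<forall>t. y j t = 0"
  shows "\<forall>t. t \<noteq> 0 \<and> 1 - t / q \<noteq> 0 \<longrightarrow> (\<forall>i\<in>{1..n}.
      x i (t / q) = (\<Sum>j\<in>{1..n}. (A0 n a b i j + A1 n a b i j / (1 - t / q)) * x j t))"
proof (intro allI impI ballI)
  fix t i assume t: "t \<noteq> 0 \<and> 1 - t / q \<noteq> 0" and i: "i \<in> {1..n}"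
  have qnz: "q \<noteq> 0" using q by auto
  define s where "s = t / q"
  have s: "s \<noteq> 0" "q * s = t" using t qnz by (auto simp: s_def)
  define u where "u j = x j s" for j
  define v where "v j = x j t" for j
  have yz: "yext q n y j r = 0" if "j \<le> n" for j r
    using y0 that n2 by (auto simp: yext_def)
  have E: "xext n x j s - xext n x (j - 1) s = a j * xext n x j t - bext q n b (j - 1) * xext n x (j - 1) t"
    if "j \<in> {1..n}" for j
  proof -
    have "yext q n y (j - 1) s = 0" using that by (intro yz) auto
    then show ?thesis using eq1[rule_format, OF s(1) that] s(2) by simp
  qed
  have E1: "u 1 - s * u n = a 1 * v 1 - b n / q * (t * v n)"
    using E[of 1] n2 by (simp add: xext_def bext_def u_def v_def)
  have Ej: "u j - u (j - 1) = a j * v j - b (j - 1) * v (j - 1)" if "j \<in> {2..n}" for j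
    using E[of j] that by (simp add: xext_def bext_def u_def v_def)
  define c where "c = u 1 - a 1 * v 1"
  have U: "u j = c + (\<Sum>k\<in>{1..j}. a k * v k) - (\<Sum>k\<in>{1..<j}. b k * v k)" if "j \<in> {1..n}" for j
    using that
  proof (induction j)
    case 0 then show ?case by simp
  next
    case (Suc j)
    show ?case
    proof (cases "j = 0")
      case True then show ?thesis by (simp add: c_def)
    next
      case False
      then have "Suc j \<in> {2..n}" using Suc.prems by auto
      from Ej[OF this] Suc.IH Suc.prems False show ?thesis
        apply (simp add: algebra_simps)
        apply algebra
        done
    qed
  qed
  define D where "D = (\<Sum>k\<in>{1..n}. (a k - b k) * v k)"
  have un: "u n = c + D + b n * v n"
  proof -
    have "{1..n} = insert n {1..<n}" using n2 by auto
    then have "(\<Sum>k\<in>{1..n}. b k * v k) = b n * v n + (\<Sum>k\<in>{1..<n}. b k * v k)" by simp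
    then show ?thesis using U[of n] n2 by (simp add: D_def sum_subtractf algebra_simps)
  qed
  have "c - s * (c + D) = 0"
    using E1 un qnz unfolding c_def s_def by (simp add: field_simps)
  then have cD: "c * (1 - s) = s * D" by (simp add: algebra_simps)
  have sne: "1 - s \<noteq> 0" using t s_def by simp
  have c: "c = D / (1 - s) - D"
    using cD sne by (simp add: field_simps)
  have fin: "x i (t / q) = u i" by (simp add: u_def s_def)
  have split1: "{1..n} = {1..i} \<union> {i<..n}" and disj1: "{1..i} \<inter> {i<..n} = {}" using i by auto
  have split2: "{1..i} = insert i {1..<i}" using i by auto
  have "(\<Sum>j\<in>{1..n}. (A0 n a b i j + A1 n a b i j / (1 - t / q)) * x j t)
     = (\<Sum>j\<in>{1..n}. ((if i = j then b j else 0) + (if i < j then b j - a j else 0)) * v j)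
       + D / (1 - s)"
  proof -
    have "(\<Sum>j\<in>{1..n}. (A0 n a b i j + A1 n a b i j / (1 - t / q)) * x j t)
      = (\<Sum>j\<in>{1..n}. ((if i = j then b j else 0) + (if i < j then b j - a j else 0)) * v j
         + (a j - b j) * v j / (1 - s))"
    proof (intro sum.cong refl)
      fix j assume j: "j \<in> {1..n}"
      show "(A0 n a b i j + A1 n a b i j / (1 - t / q)) * x j t
        = ((if i = j then b j else 0) + (if i < j then b j - a j else 0)) * v j
         + (a j - b j) * v j / (1 - s)"
        unfolding A0_entry[OF i j] A1_entry[OF i j] v_def s_def by (simp add: algebra_simps)
    qed
    also have "\<dots> = (\<Sum>j\<in>{1..n}. ((if i = j then b j else 0) + (if i < j then b j - a j else 0)) * v j)
       + D / (1 - s)"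
      by (simp add: sum.distrib D_def sum_divide_distrib)
    finally show ?thesis .
  qed
  also have "(\<Sum>j\<in>{1..n}. ((if i = j then b j else 0) + (if i < j then b j - a j else 0)) * v j)
      = b i * v i + (\<Sum>j\<in>{i<..n}. (b j - a j) * v j)"
  proof -
    let ?f = "\<lambda>j. ((if i = j then b j else 0) + (if i < j then b j - a j else 0)) * v j"
    have "sum ?f {1..n} = sum ?f {1..i} + sum ?f {i<..n}"
      unfolding split1 by (rule sum.union_disjoint) (auto simp: disj1)
    also have "sum ?f {1..i} = ?f i + sum ?f {1..<i}" unfolding split2 by simp
    also have "sum ?f {1..<i} = 0" by (intro sum.neutral) auto
    also have "sum ?f {i<..n} = (\<Sum>j\<in>{i<..n}. (b j - a j) * v j)" by (intro sum.cong) auto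
    finally show ?thesis by simp
  qed
  finally have R: "(\<Sum>j\<in>{1..n}. (A0 n a b i j + A1 n a b i j / (1 - t / q)) * x j t)
      = b i * v i + (\<Sum>j\<in>{i<..n}. (b j - a j) * v j) + D / (1 - s)" .
  have DD: "D = (\<Sum>k\<in>{1..i}. a k * v k) - (\<Sum>k\<in>{1..<i}. b k * v k) - b i * v i
      + (\<Sum>k\<in>{i<..n}. (a k - b k) * v k)"
  proof -
    let ?f = "\<lambda>k. (a k - b k) * v k"
    have "D = sum ?f {1..i} + sum ?f {i<..n}"
      unfolding D_def split1 by (rule sum.union_disjoint) (auto simp: disj1)
    also have "sum ?f {1..i} = (\<Sum>k\<in>{1..i}. a k * v k) - (\<Sum>k\<in>{1..i}. b k * v k)"
      by (simp add: sum_subtractf algebra_simps)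
    also have "(\<Sum>k\<in>{1..i}. b k * v k) = b i * v i + (\<Sum>k\<in>{1..<i}. b k * v k)"
      unfolding split2 by simp
    finally show ?thesis by (simp add: algebra_simps)
  qed
  show "x i (t / q) = (\<Sum>j\<in>{1..n}. (A0 n a b i j + A1 n a b i j / (1 - t / q)) * x j t)"
    unfolding R fin U[OF i] c DD
    by (simp add: sum_subtractf algebra_simps)
qed

end
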